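(* Let $\mathcal{K}: C^0[0,1]\to C^0[0,1]$ be the backstepping kernel operator, i.e. $k=\mathcal{K}(\beta)$ is the continuous solution of $k(x) = -\beta(x) + \int_0^x \beta(x-y)k(y)\,dy$ for $x\in[0,1]$. Then for any $B>0$ and any pair $\beta_1,\beta_2\in C^0[0,1]$ with $\|\beta_1\|_\infty\le B$ and $\|\beta_2\|_\infty\le B$, $$\|\mathcal{K}(\beta_1)-\mathcal{K}(\beta_2)\|_\infty \le e^{3B}\,\|\beta_1-\beta_2\|_\infty .$$
   Context: $\|\cdot\|_\infty$ denotes the supremum norm over $[0,1]$. The convolution is $(a*b)(x)=\int_0^x a(x-y)b(y)\,dy$, so the kernel equation reads $\mathcal{K}(\beta) = -\beta + \beta*\mathcal{K}(\beta)$. *)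

theory Defs
  imports "HOL-Analysis.Analysis"
begin

definition supnorm :: "(real \<Rightarrow> real) \<Rightarrow> real" where
  "supnorm f = (SUP x\<in>{0..1}. \<bar>f x\<bar>)"

definition conv :: "(real \<Rightarrow> real) \<Rightarrow> (real \<Rightarrow> real) \<Rightarrow> real \<Rightarrow> real" where
  "conv a b x = integral {0..x} (\<lambda>y. a (x - y) * b y)"

definition kernel_eq :: "(real \<Rightarrow> real) \<Rightarrow> (real \<Rightarrow> real) \<Rightarrow> bool" where
  "kernel_eq \<beta> k \<longleftrightarrow> continuous_on {0..1} k \<and>
     (\<forall>x\<in>{0..1}. k x = - \<beta> x + conv \<beta> k x)"

text \<open>The backstepping kernel operator; functions on [0,1] are represented as
  real functions that vanish outside [0,1] (canonical representative).\<close>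
definition Kop :: "(real \<Rightarrow> real) \<Rightarrow> (real \<Rightarrow> real)" where
  "Kop \<beta> = (THE k. kernel_eq \<beta> k \<and> (\<forall>x. x \<notin> {0..1} \<longrightarrow> k x = 0))"

end

theory Submission
  imports Defs
begin

lemma conv_integrable:
  fixes a w :: "real \<Rightarrow> real"
  assumes a: "continuous_on {0..1} a" and w: "continuous_on {0..1} w" and x: "x \<in> {0..1}"
  shows "(\<lambda>y. a (x - y) * w y) integrable_on {0..x}"
proof -
  have "continuous_on {0..x} (\<lambda>y. a (x - y) * w y)"
  proof (intro continuous_on_mult)
    show "continuous_on {0..x} (\<lambda>y. a (x - y))"
      by (rule continuous_on_compose2[OF a]) (use x in \<open>auto intro!: continuous_intros\<close>)
    show "continuous_on {0..x} w"
      by (rule continuous_on_subset[OF w]) (use x in auto)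
  qed
  then show ?thesis by (rule integrable_continuous_real)
qed

lemma conv_subst:
  assumes x: "x \<in> {0..1}"
  shows "conv a w x = x * integral {0..1} (\<lambda>t. a (x - x * t) * w (x * t))"
proof (cases "x = 0")
  case True then show ?thesis by (simp add: conv_def)
next
  case False
  with x have xp: "x > 0" by auto
  have img: "(\<lambda>t. t / x) ` {0..x} = {0..1}"
  proof
    show "(\<lambda>t. t / x) ` {0..x} \<subseteq> {0..1}" using xp by (auto simp: divide_le_eq_1)
    show "{0..1} \<subseteq> (\<lambda>t. t / x) ` {0..x}"
    proof
      fix t assume "t \<in> {(0::real)..1}"
      then have "x * t \<in> {0..x}" "t = (x * t) / x" using xp by (auto simp: mult_le_cancel_left1)
      then show "t \<in> (\<lambda>t. t / x) ` {0..x}" by blast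
    qed
  qed
  have "integral {0..1} (\<lambda>t. a (x - x * t) * w (x * t)) = (1 / \<bar>x\<bar>) *\<^sub>R integral {0..x} (\<lambda>y. a (x - y) * w y)"
    using integral_stretch_real[of x 0 x "\<lambda>y. a (x - y) * w y"] xp img by simp
  then show ?thesis using xp by (simp add: conv_def)
qed

lemma cont_conv:
  assumes a: "continuous_on {0..1} a" and w: "continuous_on {0..1} w"
  shows "continuous_on {0..1} (conv a w)"
proof -
  have c: "continuous_on ({0..1} \<times> cbox 0 1) (\<lambda>(x, t). a (x - x * t) * w (x * t))"
  proof -
    have s1: "(\<lambda>p. fst p - fst p * snd p) ` ({0..1} \<times> cbox 0 1) \<subseteq> {0..(1::real)}"
    proof
      fix z assume "z \<in> (\<lambda>p. fst p - fst p * snd p) ` ({0..1} \<times> cbox 0 (1::real))"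
      then obtain x t where xt: "x \<in> {0..1}" "t \<in> {0..1}" "z = x - x * t" by auto
      have "x * t \<le> x" using xt by (simp add: mult_left_le)
      moreover have "x * t \<ge> 0" using xt by simp
      ultimately show "z \<in> {0..1}" using xt by auto
    qed
    have s2: "(\<lambda>p. fst p * snd p) ` ({0..1} \<times> cbox 0 1) \<subseteq> {0..(1::real)}"
      by (auto simp: mult_le_one)
    have "continuous_on ({0..1} \<times> cbox 0 1) (\<lambda>p. a (fst p - fst p * snd p) * w (fst p * snd p))"
      apply (intro continuous_on_mult)
       apply (rule continuous_on_compose2[OF a _ s1]) apply (intro continuous_intros)
      apply (rule continuous_on_compose2[OF w _ s2]) apply (intro continuous_intros)
      done
    then show ?thesis by (simp add: case_prod_beta)
  qed
  have "continuous_on {0..1} (\<lambda>x. integral (cbox 0 1) (\<lambda>t. a (x - x * t) * w (x * t)))"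
    by (rule integral_continuous_on_param[OF c])
  then have "continuous_on {0..1} (\<lambda>x. x * integral (cbox 0 1) (\<lambda>t. a (x - x * t) * w (x * t)))"
    by (intro continuous_on_mult continuous_on_id)
  then show ?thesis
    by (rule continuous_on_cong[THEN iffD1, rotated -1]) (auto simp: conv_subst)
qed


lemma pow_has_integral:
  assumes "(0::real) \<le> x"
  shows "((\<lambda>y. y ^ n) has_integral x ^ Suc n / real (Suc n)) {0..x}"
proof -
  have "((\<lambda>y. y ^ n) has_integral (x ^ Suc n / real (Suc n) - 0 ^ Suc n / real (Suc n))) {0..x}"
  proof (rule fundamental_theorem_of_calculus[OF assms])
    fix y :: real assume "y \<in> {0..x}"
    have "((\<lambda>y. y ^ Suc n / real (Suc n)) has_real_derivative y ^ n) (at y within {0..x})"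
      by (rule derivative_eq_intros refl | simp)+
    then show "((\<lambda>y. y ^ Suc n / real (Suc n)) has_vector_derivative y ^ n) (at y within {0..x})"
      by (simp add: has_real_derivative_iff_has_vector_derivative)
  qed
  then show ?thesis by simp
qed

lemma conv_bound:
  fixes a w :: "real \<Rightarrow> real"
  assumes a: "continuous_on {0..1} a" and w: "continuous_on {0..1} w" and x: "x \<in> {0..1}"
    and B: "B \<ge> 0" and A: "A \<ge> 0" and C: "C \<ge> 0"
    and ab: "\<And>y. y \<in> {0..1} \<Longrightarrow> \<bar>a y\<bar> \<le> B"
    and wb: "\<And>y. y \<in> {0..1} \<Longrightarrow> \<bar>w y\<bar> \<le> C * exp (A * y) * (B * y) ^ n / fact n"
  shows "\<bar>conv a w x\<bar> \<le> C * exp (A * x) * (B * x) ^ Suc n / fact (Suc n)"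
proof -
  define K where "K = B * C * exp (A * x) * B ^ n / fact n"
  have K0: "K \<ge> 0" using B C by (simp add: K_def)
  have gi: "((\<lambda>y. K * y ^ n) has_integral K * (x ^ Suc n / real (Suc n))) {0..x}"
    by (rule has_integral_mult_right[OF pow_has_integral]) (use x in auto)
  have "norm (integral {0..x} (\<lambda>y. a (x - y) * w y)) \<le> integral {0..x} (\<lambda>y. K * y ^ n)"
  proof (rule integral_norm_bound_integral)
    show "(\<lambda>y. a (x - y) * w y) integrable_on {0..x}" by (rule conv_integrable[OF a w x])
    show "(\<lambda>y. K * y ^ n) integrable_on {0..x}" using gi by blast
    fix y assume y: "y \<in> {0..x}"
    then have y1: "y \<in> {0..1}" and xy: "x - y \<in> {0..1}" using x by auto
    have "\<bar>a (x - y)\<bar> * \<bar>w y\<bar> \<le> B * (C * exp (A * y) * (B * y) ^ n / fact n)"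
      by (intro mult_mono ab xy wb y1) (use B in auto)
    also have "\<dots> \<le> B * (C * exp (A * x) * (B * y) ^ n / fact n)"
      using y A B C by (intro mult_left_mono divide_right_mono mult_right_mono) (auto intro: mult_left_mono)
    also have "\<dots> = K * y ^ n" by (simp add: K_def power_mult_distrib)
    finally show "norm (a (x - y) * w y) \<le> K * y ^ n" by (simp add: abs_mult)
  qed
  also have "\<dots> = K * (x ^ Suc n / real (Suc n))" using gi by (rule integral_unique)
  also have "\<dots> = C * exp (A * x) * (B * x) ^ Suc n / fact (Suc n)"
    by (simp add: K_def power_mult_distrib field_simps)
  finally show ?thesis by (simp add: conv_def)
qed

lemma conv_diff:
  fixes a g h :: "real \<Rightarrow> real"
  assumes a: "continuous_on {0..1} a" and g: "continuous_on {0..1} g" and h: "continuous_on {0..1} h"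
    and x: "x \<in> {0..1}"
  shows "conv a (\<lambda>y. g y - h y) x = conv a g x - conv a h x"
proof -
  have "conv a g x - conv a h x = integral {0..x} (\<lambda>y. a (x - y) * g y - a (x - y) * h y)"
    unfolding conv_def by (rule integral_diff[symmetric] conv_integrable a g h x)+
  then show ?thesis by (simp add: conv_def right_diff_distrib)
qed

lemma conv_diff1:
  fixes a b k :: "real \<Rightarrow> real"
  assumes a: "continuous_on {0..1} a" and b: "continuous_on {0..1} b" and k: "continuous_on {0..1} k"
    and x: "x \<in> {0..1}"
  shows "conv (\<lambda>y. a y - b y) k x = conv a k x - conv b k x"
proof -
  have "conv a k x - conv b k x = integral {0..x} (\<lambda>y. a (x - y) * k y - b (x - y) * k y)"
    unfolding conv_def by (rule integral_diff[symmetric] conv_integrable a b k x)+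
  then show ?thesis by (simp add: conv_def left_diff_distrib)
qed

lemma conv_sum:
  fixes a :: "real \<Rightarrow> real" and d :: "nat \<Rightarrow> real \<Rightarrow> real"
  assumes a: "continuous_on {0..1} a" and d: "\<And>i. continuous_on {0..1} (d i)"
    and x: "x \<in> {0..1}"
  shows "conv a (\<lambda>y. \<Sum>i<N. d i y) x = (\<Sum>i<N. conv a (d i) x)"
proof -
  have "(\<Sum>i<N. conv a (d i) x) = integral {0..x} (\<lambda>y. \<Sum>i<N. a (x - y) * d i y)"
    unfolding conv_def by (rule integral_sum[symmetric]) (auto intro: conv_integrable a d x)
  then show ?thesis by (simp add: conv_def sum_distrib_left)
qed


lemma cont_bounded01:
  fixes w :: "real \<Rightarrow> real"
  assumes "continuous_on {0..1} w"
  obtains M where "M \<ge> 0" "\<And>y. y \<in> {0..1} \<Longrightarrow> \<bar>w y\<bar> \<le> M"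
proof -
  have "compact (w ` {0..1})" by (rule compact_continuous_image[OF assms compact_Icc])
  then obtain M where "M > 0" "\<forall>z\<in>w ` {0..1}. norm z \<le> M"
    using compact_imp_bounded bounded_pos by blast
  then show ?thesis using that[of M] by auto
qed

lemma uniq:
  fixes a w :: "real \<Rightarrow> real"
  assumes a: "continuous_on {0..1} a" and w: "continuous_on {0..1} w"
    and B: "B \<ge> 0" and ab: "\<And>y. y \<in> {0..1} \<Longrightarrow> \<bar>a y\<bar> \<le> B"
    and eq: "\<And>x. x \<in> {0..1} \<Longrightarrow> w x = conv a w x"
    and x: "x \<in> {0..1}"
  shows "w x = 0"
proof -
  obtain M where M: "M \<ge> 0" "\<And>y. y \<in> {0..1} \<Longrightarrow> \<bar>w y\<bar> \<le> M" using cont_bounded01[OF w] by blast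
  have ind: "\<forall>y\<in>{0..1}. \<bar>w y\<bar> \<le> M * exp (0 * y) * (B * y) ^ n / fact n" for n
  proof (induction n)
    case 0 then show ?case using M by simp
  next
    case (Suc n)
    show ?case
    proof
      fix y :: real assume y: "y \<in> {0..1}"
      have "\<bar>conv a w y\<bar> \<le> M * exp (0 * y) * (B * y) ^ Suc n / fact (Suc n)"
        by (rule conv_bound[OF a w y B order_refl M(1) ab]) (use Suc in auto)
      then show "\<bar>w y\<bar> \<le> M * exp (0 * y) * (B * y) ^ Suc n / fact (Suc n)" using eq[OF y] by simp
    qed
  qed
  have "summable (\<lambda>n. inverse (fact n) * (B * x) ^ n)" by (rule summable_exp)
  then have "(\<lambda>n. inverse (fact n) * (B * x) ^ n) \<longlonglongrightarrow> 0" by (rule summable_LIMSEQ_zero)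
  then have "(\<lambda>n. M * (inverse (fact n) * (B * x) ^ n)) \<longlonglongrightarrow> M * 0" by (intro tendsto_mult tendsto_const)
  moreover have "\<bar>w x\<bar> \<le> M * (inverse (fact n) * (B * x) ^ n)" for n
  proof -
    have "\<bar>w x\<bar> \<le> M * exp (0 * x) * (B * x) ^ n / fact n" using ind[of n] x by blast
    then show ?thesis by (simp add: field_simps)
  qed
  ultimately have "\<bar>w x\<bar> \<le> 0"
    by (intro tendsto_lowerbound[where F=sequentially]) (auto intro: always_eventually)
  then show ?thesis by simp
qed

fun dser :: "(real \<Rightarrow> real) \<Rightarrow> (real \<Rightarrow> real) \<Rightarrow> nat \<Rightarrow> real \<Rightarrow> real" where
  "dser a f 0 = f"
| "dser a f (Suc n) = conv a (dser a f n)"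

lemma conv_tendsto:
  fixes a u :: "real \<Rightarrow> real" and g :: "nat \<Rightarrow> real \<Rightarrow> real"
  assumes a: "continuous_on {0..1} a" and u: "continuous_on {0..1} u" and g: "\<And>n. continuous_on {0..1} (g n)"
    and B: "B \<ge> 0" and ab: "\<And>y. y \<in> {0..1} \<Longrightarrow> \<bar>a y\<bar> \<le> B"
    and ul: "uniform_limit {0..1} g u sequentially" and x: "x \<in> {0..1}"
  shows "(\<lambda>n. conv a (g n) x) \<longlonglongrightarrow> conv a u x"
proof (rule tendstoI)
  fix e :: real assume e: "e > 0"
  define \<epsilon> where "\<epsilon> = e / (2 * (B + 1))"
  have ep: "\<epsilon> > 0" using e B by (simp add: \<epsilon>_def)
  have "\<forall>\<^sub>F n in sequentially. \<forall>y\<in>{0..1}. dist (g n y) (u y) < \<epsilon>"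
    using uniform_limitD[OF ul ep] .
  then show "\<forall>\<^sub>F n in sequentially. dist (conv a (g n) x) (conv a u x) < e"
  proof eventually_elim
    case (elim n)
    have gu: "continuous_on {0..1} (\<lambda>y. g n y - u y)" by (intro continuous_intros g u)
    have "\<bar>conv a (\<lambda>y. g n y - u y) x\<bar> \<le> \<epsilon> * exp (0 * x) * (B * x) ^ Suc 0 / fact (Suc 0)"
      by (rule conv_bound[OF a gu x B order_refl _ ab]) (use ep elim in \<open>auto simp: dist_real_def less_imp_le\<close>)
    also have "\<dots> = \<epsilon> * (B * x)" by simp
    also have "\<dots> \<le> \<epsilon> * B" using x ep B by (intro mult_left_mono) (auto simp: mult_left_le)
    also have "\<dots> < e" using e B by (simp add: \<epsilon>_def field_simps add_nonneg_pos)
    finally show ?case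
      using conv_diff[OF a g u x, of n] by (simp add: dist_real_def)
  qed
qed


lemma exist:
  fixes a f :: "real \<Rightarrow> real"
  assumes a: "continuous_on {0..1} a" and f: "continuous_on {0..1} f"
    and B: "B \<ge> 0" and A: "A \<ge> 0" and C: "C \<ge> 0"
    and ab: "\<And>y. y \<in> {0..1} \<Longrightarrow> \<bar>a y\<bar> \<le> B"
    and fb: "\<And>y. y \<in> {0..1} \<Longrightarrow> \<bar>f y\<bar> \<le> C * exp (A * y)"
  shows "\<exists>u. continuous_on {0..1} u \<and> (\<forall>x\<in>{0..1}. u x = f x + conv a u x)
           \<and> (\<forall>x\<in>{0..1}. \<bar>u x\<bar> \<le> C * exp ((A + B) * x))"
proof -
  let ?d = "dser a f"
  have dc: "continuous_on {0..1} (?d n)" for n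
    by (induction n) (auto intro: cont_conv a f)
  have db: "\<forall>y\<in>{0..1}. \<bar>?d n y\<bar> \<le> C * exp (A * y) * (B * y) ^ n / fact n" for n
  proof (induction n)
    case 0 then show ?case using fb by simp
  next
    case (Suc n) then show ?case
      using conv_bound[OF a dc _ B A C ab] by simp
  qed
  define M where "M n = C * exp A * (inverse (fact n) * B ^ n)" for n
  have Ms: "summable M" unfolding M_def by (intro summable_mult summable_exp)
  have dM: "norm (?d n y) \<le> M n" if y: "y \<in> {0..1}" for n y
  proof -
    have "\<bar>?d n y\<bar> \<le> C * exp (A * y) * (B * y) ^ n / fact n" using db y by blast
    also have "\<dots> \<le> C * exp A * B ^ n / fact n"
      using y A B C by (intro divide_right_mono mult_mono mult_left_mono power_mono)
        (auto simp: mult_left_le)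
    finally show ?thesis by (simp add: M_def field_simps)
  qed
  define u where "u x = (\<Sum>i. ?d i x)" for x
  define S where "S N x = (\<Sum>i<N. ?d i x)" for N x
  have ul: "uniform_limit {0..1} S u sequentially"
    unfolding S_def u_def by (rule Weierstrass_m_test[OF dM Ms])
  have Sc: "continuous_on {0..1} (S N)" for N
    unfolding S_def by (intro continuous_on_sum dc)
  have uc: "continuous_on {0..1} u"
    by (rule uniform_limit_theorem[OF _ ul]) (auto intro: always_eventually Sc)
  have eq: "u x = f x + conv a u x" if x: "x \<in> {0..1}" for x
  proof -
    have "S (Suc N) x = f x + conv a (S N) x" for N
    proof -
      have "S (Suc N) x = ?d 0 x + (\<Sum>i<N. ?d (Suc i) x)"
        unfolding S_def by (rule sum.lessThan_Suc_shift)
      also have "(\<Sum>i<N. ?d (Suc i) x) = conv a (S N) x"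
        unfolding S_def by (simp add: conv_sum[OF a dc x])
      finally show ?thesis by simp
    qed
    moreover have "(\<lambda>N. S (Suc N) x) \<longlonglongrightarrow> u x"
      using tendsto_uniform_limitI[OF ul x] by (rule LIMSEQ_Suc)
    moreover have "(\<lambda>N. f x + conv a (S N) x) \<longlonglongrightarrow> f x + conv a u x"
      by (intro tendsto_add tendsto_const conv_tendsto[OF a uc Sc B ab ul x])
    ultimately show ?thesis using LIMSEQ_unique by fastforce
  qed
  have bnd: "\<bar>u x\<bar> \<le> C * exp ((A + B) * x)" if x: "x \<in> {0..1}" for x
  proof -
    have su: "(\<lambda>i. ?d i x) sums u x"
      using tendsto_uniform_limitI[OF ul x] unfolding S_def sums_def u_def by simp
    have "(\<lambda>n. (B * x) ^ n /\<^sub>R fact n) sums exp (B * x)" by (rule exp_converges)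
    then have sb: "(\<lambda>n. C * exp (A * x) * ((B * x) ^ n /\<^sub>R fact n)) sums (C * exp (A * x) * exp (B * x))"
      by (rule sums_mult)
    have ab': "\<bar>?d n x\<bar> \<le> C * exp (A * x) * ((B * x) ^ n /\<^sub>R fact n)" for n
    proof -
      have "\<bar>?d n x\<bar> \<le> C * exp (A * x) * (B * x) ^ n / fact n" using db[of n] x by blast
      then show ?thesis by (simp add: divide_inverse_commute mult.assoc mult.left_commute)
    qed
    have le1: "?d n x \<le> C * exp (A * x) * ((B * x) ^ n /\<^sub>R fact n)" for n
      using ab'[of n] by linarith
    have le2: "- (C * exp (A * x) * ((B * x) ^ n /\<^sub>R fact n)) \<le> ?d n x" for n
      using ab'[of n] by linarith
    have "u x \<le> C * exp (A * x) * exp (B * x)" by (rule sums_le[OF _ su sb]) (use le1 in auto)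
    moreover have "- (C * exp (A * x) * exp (B * x)) \<le> u x"
      by (rule sums_le[OF _ sums_minus[OF sb] su]) (use le2 in auto)
    ultimately show ?thesis by (simp add: distrib_right exp_add mult.assoc)
  qed
  show ?thesis using uc eq bnd by blast
qed


lemma sup_ge:
  assumes "continuous_on {0..1} g" "y \<in> {0..1}"
  shows "\<bar>g y\<bar> \<le> supnorm g"
proof -
  obtain M where M: "M \<ge> 0" "\<And>y. y \<in> {0..1} \<Longrightarrow> \<bar>g y\<bar> \<le> M" using cont_bounded01[OF assms(1)] by blast
  have "bdd_above ((\<lambda>x. \<bar>g x\<bar>) ` {0..1})" by (rule bdd_aboveI2[where M=M]) (rule M(2))
  then show ?thesis unfolding supnorm_def by (rule cSUP_upper[OF assms(2)])
qed

lemma sup_le: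
  assumes "\<And>y. y \<in> {0..1} \<Longrightarrow> \<bar>g y\<bar> \<le> c"
  shows "supnorm g \<le> c"
  unfolding supnorm_def by (rule cSUP_least) (use assms in auto)

lemma Kop_props:
  fixes a :: "real \<Rightarrow> real"
  assumes a: "continuous_on {0..1} a" and B: "B \<ge> 0" and ab: "\<And>y. y \<in> {0..1} \<Longrightarrow> \<bar>a y\<bar> \<le> B"
  shows "kernel_eq a (Kop a) \<and> (\<forall>x\<in>{0..1}. \<bar>Kop a x\<bar> \<le> B * exp (B * x))"
proof -
  have ma: "continuous_on {0..1} (\<lambda>y. - a y)" by (intro continuous_intros a)
  obtain u where u: "continuous_on {0..1} u" "\<forall>x\<in>{0..1}. u x = - a x + conv a u x"
    "\<forall>x\<in>{0..1}. \<bar>u x\<bar> \<le> B * exp ((0 + B) * x)"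
    using exist[OF a ma B order_refl B ab] ab by auto
  define k where "k x = (if x \<in> {0..1} then u x else 0)" for x
  have kc: "continuous_on {0..1} k"
    using u(1) by (rule continuous_on_cong[THEN iffD1, rotated -1]) (auto simp: k_def)
  have ck: "conv a k x = conv a u x" if "x \<in> {0..1}" for x
    unfolding conv_def using that by (intro integral_cong) (auto simp: k_def)
  have Pk: "kernel_eq a k \<and> (\<forall>x. x \<notin> {0..1} \<longrightarrow> k x = 0)"
    unfolding kernel_eq_def using kc u(2) ck by (auto simp: k_def)
  have un: "k' = k" if "kernel_eq a k' \<and> (\<forall>x. x \<notin> {0..1} \<longrightarrow> k' x = 0)" for k'
  proof
    fix x
    have k'c: "continuous_on {0..1} k'" and k'e: "\<forall>x\<in>{0..1}. k' x = - a x + conv a k' x"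
      using that unfolding kernel_eq_def by auto
    have ke: "\<forall>x\<in>{0..1}. k x = - a x + conv a k x" using Pk unfolding kernel_eq_def by auto
    show "k' x = k x"
    proof (cases "x \<in> {0..1}")
      case True
      have "k' x - k x = 0"
      proof (rule uniq[OF a _ B ab _ True])
        show "continuous_on {0..1} (\<lambda>y. k' y - k y)" by (intro continuous_intros k'c kc)
        fix y :: real assume y: "y \<in> {0..1}"
        show "k' y - k y = conv a (\<lambda>y. k' y - k y) y"
          using conv_diff[OF a k'c kc y] k'e ke y by simp
      qed
      then show ?thesis by simp
    next
      case False then show ?thesis using that Pk by auto
    qed
  qed
  have "Kop a = k" unfolding Kop_def by (rule the_equality[of "\<lambda>k. kernel_eq a k \<and> (\<forall>x. x \<notin> {0..1} \<longrightarrow> k x = 0)" k, OF Pk un])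
  then show ?thesis using Pk u(3) by (auto simp: k_def)
qed

theorem lemma1:
  fixes \<beta>1 \<beta>2 :: "real \<Rightarrow> real" and B :: real
  assumes "B > 0"
    and "continuous_on {0..1} \<beta>1" and "continuous_on {0..1} \<beta>2"
    and "supnorm \<beta>1 \<le> B" and "supnorm \<beta>2 \<le> B"
  shows "supnorm (\<lambda>x. Kop \<beta>1 x - Kop \<beta>2 x) \<le> exp (3 * B) * supnorm (\<lambda>x. \<beta>1 x - \<beta>2 x)"
proof -
  note c1 = assms(2) and c2 = assms(3)
  have B: "B \<ge> 0" using assms(1) by simp
  have b1: "\<bar>\<beta>1 y\<bar> \<le> B" if "y \<in> {0..1}" for y using sup_ge[OF c1 that] assms(4) by simp
  have b2: "\<bar>\<beta>2 y\<bar> \<le> B" if "y \<in> {0..1}" for y using sup_ge[OF c2 that] assms(5) by simp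
  define k1 where "k1 = Kop \<beta>1"
  define k2 where "k2 = Kop \<beta>2"
  have K1: "kernel_eq \<beta>1 k1" "\<forall>x\<in>{0..1}. \<bar>k1 x\<bar> \<le> B * exp (B * x)"
    using Kop_props[OF c1 B b1] unfolding k1_def by auto
  have K2: "kernel_eq \<beta>2 k2" using Kop_props[OF c2 B b2] unfolding k2_def by auto
  have k1c: "continuous_on {0..1} k1" and k1e: "\<forall>x\<in>{0..1}. k1 x = - \<beta>1 x + conv \<beta>1 k1 x"
    using K1(1) unfolding kernel_eq_def by auto
  have k2c: "continuous_on {0..1} k2" and k2e: "\<forall>x\<in>{0..1}. k2 x = - \<beta>2 x + conv \<beta>2 k2 x"
    using K2 unfolding kernel_eq_def by auto
  define db where "db y = \<beta>1 y - \<beta>2 y" for y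
  define D where "D = supnorm db"
  have dbc: "continuous_on {0..1} db" unfolding db_def by (intro continuous_intros c1 c2)
  have dbb: "\<bar>db y\<bar> \<le> D" if "y \<in> {0..1}" for y unfolding D_def by (rule sup_ge[OF dbc that])
  have D0: "D \<ge> 0" using dbb[of 0] by simp
  define g where "g x = - db x + conv db k1 x" for x
  have gc: "continuous_on {0..1} g" unfolding g_def by (intro continuous_intros cont_conv dbc k1c)
  have gb: "\<bar>g x\<bar> \<le> D * exp (2 * B * x)" if x: "x \<in> {0..1}" for x
  proof -
    have "\<bar>conv db k1 x\<bar> \<le> B * exp (B * x) * (D * x) ^ Suc 0 / fact (Suc 0)"
      by (rule conv_bound[OF dbc k1c x D0 B B dbb]) (use K1(2) in auto)
    then have "\<bar>g x\<bar> \<le> D + D * (B * x * exp (B * x))"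
      using dbb[OF x] unfolding g_def by (simp add: algebra_simps)
    also have "\<dots> \<le> D * exp (2 * B * x)"
    proof (rule mult_left_mono[OF _ D0, of "1 + B * x * exp (B * x)", simplified distrib_left mult_1_right])
      define t where "t = B * x"
      have t0: "t \<ge> 0" using x B by (simp add: t_def)
      have "1 + t \<le> exp t" by (rule exp_ge_add_one_self)
      then have "exp t * 1 \<le> exp t * (exp t - t)" by (intro mult_left_mono) (auto simp: algebra_simps)
      moreover have "1 \<le> exp t" using t0 by simp
      moreover have "exp (2 * t) = exp t * exp t" by (simp add: exp_add[symmetric])
      ultimately have "1 + t * exp t \<le> exp (2 * t)"
        by (simp only: algebra_simps right_diff_distrib)
      then show "1 + B * x * exp (B * x) \<le> exp (2 * B * x)" by (simp add: t_def mult.assoc)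
    qed
    finally show ?thesis .
  qed
  obtain u where u: "continuous_on {0..1} u" "\<forall>x\<in>{0..1}. u x = g x + conv \<beta>2 u x"
    "\<forall>x\<in>{0..1}. \<bar>u x\<bar> \<le> D * exp ((2 * B + B) * x)"
    using exist[OF c2 gc B _ D0 b2, of "2 * B"] gb B by (auto simp: mult.assoc)
  define dk where "dk y = k1 y - k2 y" for y
  have dkc: "continuous_on {0..1} dk" unfolding dk_def by (intro continuous_intros k1c k2c)
  have dke: "dk x = g x + conv \<beta>2 dk x" if x: "x \<in> {0..1}" for x
  proof -
    have "conv \<beta>1 k1 x = conv db k1 x + conv \<beta>2 k1 x"
      using conv_diff1[OF c1 c2 k1c x] unfolding db_def by simp
    moreover have "conv \<beta>2 dk x = conv \<beta>2 k1 x - conv \<beta>2 k2 x"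
      unfolding dk_def by (rule conv_diff[OF c2 k1c k2c x])
    ultimately show ?thesis using k1e k2e x unfolding dk_def g_def db_def by simp
  qed
  have ud: "u x - dk x = 0" if x: "x \<in> {0..1}" for x
  proof (rule uniq[OF c2 _ B b2 _ x])
    show "continuous_on {0..1} (\<lambda>y. u y - dk y)" by (intro continuous_intros u(1) dkc)
    fix y :: real assume y: "y \<in> {0..1}"
    show "u y - dk y = conv \<beta>2 (\<lambda>y. u y - dk y) y"
      using conv_diff[OF c2 u(1) dkc y] u(2) dke[OF y] y by simp
  qed
  have "\<bar>dk x\<bar> \<le> exp (3 * B) * D" if x: "x \<in> {0..1}" for x
  proof -
    have "\<bar>dk x\<bar> \<le> D * exp ((2 * B + B) * x)" using u(3) x ud[OF x] by force
    also have "\<dots> \<le> D * exp (3 * B)"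
      using x B D0 by (intro mult_left_mono) (auto simp: mult_left_le)
    finally show ?thesis by (simp add: mult.commute)
  qed
  then have "supnorm dk \<le> exp (3 * B) * D" by (rule sup_le)
  then show ?thesis unfolding dk_def D_def db_def k1_def k2_def .
qed

end
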